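(* Let $p\ge2$ and $c\ge2$ be integers such that $(p-2)/(c-1)$ is a positive integer, let $d=2^{p-1}$, assume $d\ge 8c(c-1)$, and let $\mu$ be as in the context. Suppose a distribution $\mathcal{D}$ over pairs $(\mathrm{sk},\mathrm{Alg})$ with space complexity $s$ $(1/8,\delta)$-succeeds for Certification, where $\delta\le 1/d$. Then there exist positive integers $k,t$ with $k\ge (d/2)^{1/(c-1)}$ and $kt\le d/2$, and a public-coin one-way protocol $\Pi$ of communication complexity $s$ that $(1/(8c),\delta)$-succeeds for $\textsc{Random-Multi-Index}(k,t)$ on strings of length $d$.
   Context: Let $d=2^{p-1}$. The distribution $\zeta$: sample a uniformly random subset $J_0\subset[d]$ of size $2^{p-2}$; for $i=1,\dots,c-1$, sample $J_i$ uniformly at random among subsets of $J_{i-1}$ of size $2^{-(p-2)/(c-1)}|J_{i-1}|$. Let $x^{(i)}\in\{0,1\}^d$ be the indicator vector of $J_i$, and let $\zeta$ be the distribution of $(x^{(0)},\dots,x^{(c-1)})$. The distribution $\mu$ is the distribution of $\sum_{i=0}^{c-1}x^{(i)}\in\{0,\dots,c\}^d$. The Certification problem: a distribution $\mathcal{D}$ over pairs $(\mathrm{sk},\mathrm{Alg})$, where $\mathrm{sk}\colon\{0,\dots,c\}^{d}\to\{0,1\}^s$ ($s$ is the space complexity) and $\mathrm{Alg}$ takes two strings in $\{0,1\}^s$ and outputs either $\bot$ or a pair $(i,\ell)\in[d]\times[c-1]$. $\mathcal{D}$ $(\alpha,\delta)$-succeeds for Certification if (i) $\Pr_{X,Y\sim\mu,\,(\mathrm{sk},\mathrm{Alg})\sim\mathcal{D}}[\mathrm{Alg}(\mathrm{sk}(X),\mathrm{sk}(Y))\ne\bot]\ge\alpha$,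 with $X,Y$ independent draws from $\mu$; and (ii) for any two points $x,y$ in the support of $\mu$, $\Pr_{(\mathrm{sk},\mathrm{Alg})\sim\mathcal{D}}[\mathrm{Alg}(\mathrm{sk}(x),\mathrm{sk}(y))=(i,\ell)\text{ for some }(i,\ell)\text{ with }\neg(x_i<\ell<y_i)]\le\delta$. For $n\le d$, $S_d(n)$ is the set of vectors in $\{0,1\}^d$ with exactly $n$ ones, and $\mathcal{I}_d(n)$ is the set of subsets of $[d]$ of size exactly $n$. $\textsc{Random-Multi-Index}(k,t)$ on strings of length $d$ (for positive integers $k,t$ with $kt\le d/2$) is the public-coin one-way communication problem in which Alice receives a uniformly random $x\sim S_d(kt)$ and sends a message $m\in\{0,1\}^s$ to Bob ($s$ is the communication complexity); Bob receives an independent uniformly random $I\sim\mathcal{I}_d(t)$ and $m$, and outputs either $\bot$ or an index $i\in I$. A protocol $(\alpha,\delta)$-succeeds if, with probability over $x$, $I$ and the protocol's randomness, (i) Bob outputs an index $i\in I$ with probability at least $\alpha$, and (ii) Bob outputs an index $i\in I$ with $x_i=1$ with probability at most $\delta$. *)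

theory Defs
  imports "HOL-Probability.Probability"
begin

text \<open>Indices of [d] are represented 0-based as {0..<d}; levels l range over {1..c-1}.\<close>

fun chain_pmf :: "nat \<Rightarrow> nat \<Rightarrow> nat set \<Rightarrow> nat set list pmf" where
  "chain_pmf r 0 J = return_pmf []"
| "chain_pmf r (Suc m) J =
     pmf_of_set {J'. J' \<subseteq> J \<and> card J' = card J div 2 ^ r} \<bind>
       (\<lambda>J'. chain_pmf r m J' \<bind> (\<lambda>Js. return_pmf (J' # Js)))"

definition zeta_sets :: "nat \<Rightarrow> nat \<Rightarrow> nat set list pmf" where
  "zeta_sets p c =
     pmf_of_set {J. J \<subseteq> {0..<2 ^ (p - 1)} \<and> card J = 2 ^ (p - 2)} \<bind>
       (\<lambda>J0. chain_pmf ((p - 2) div (c - 1)) (c - 1) J0 \<bind> (\<lambda>Js. return_pmf (J0 # Js)))"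

definition mu :: "nat \<Rightarrow> nat \<Rightarrow> (nat \<Rightarrow> nat) pmf" where
  "mu p c = map_pmf (\<lambda>Js i. sum_list (map (\<lambda>J. if i \<in> J then 1 else 0) Js)) (zeta_sets p c)"

definition vec_dom :: "nat \<Rightarrow> nat \<Rightarrow> (nat \<Rightarrow> nat) set" where
  "vec_dom d c = {x. (\<forall>i<d. x i \<le> c) \<and> (\<forall>i\<ge>d. x i = 0)}"

type_synonym sketch = "(nat \<Rightarrow> nat) \<Rightarrow> bool list"
type_synonym cert_alg = "bool list \<Rightarrow> bool list \<Rightarrow> (nat \<times> nat) option"

definition cert_succeeds ::
  "nat \<Rightarrow> nat \<Rightarrow> nat \<Rightarrow> (sketch \<times> cert_alg) pmf \<Rightarrow> real \<Rightarrow> real \<Rightarrow> bool" where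
  "cert_succeeds p c s D \<alpha> \<delta> \<longleftrightarrow>
     (let d = 2 ^ (p - 1) in
     (\<forall>(sk, Alg) \<in> set_pmf D.
         (\<forall>x \<in> vec_dom d c. length (sk x) = s) \<and>
         (\<forall>a b. length a = s \<longrightarrow> length b = s \<longrightarrow>
             Alg a b \<in> insert None (Some ` ({0..<d} \<times> {1..c - 1})))) \<and>
     measure_pmf.prob
       (mu p c \<bind> (\<lambda>X. mu p c \<bind> (\<lambda>Y. D \<bind> (\<lambda>(sk, Alg). return_pmf (Alg (sk X) (sk Y))))))
       {r. r \<noteq> None} \<ge> \<alpha> \<and>
     (\<forall>x \<in> set_pmf (mu p c). \<forall>y \<in> set_pmf (mu p c).
        measure_pmf.prob D
          {(sk, Alg). \<exists>i l. Alg (sk x) (sk y) = Some (i, l) \<and> \<not> (x i < l \<and> l < y i)} \<le> \<delta>))"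

definition S_vec :: "nat \<Rightarrow> nat \<Rightarrow> (nat \<Rightarrow> bool) set" where
  "S_vec d n = {x. (\<forall>i\<ge>d. \<not> x i) \<and> card {i. x i} = n}"

definition I_sets :: "nat \<Rightarrow> nat \<Rightarrow> nat set set" where
  "I_sets d n = {I. I \<subseteq> {0..<d} \<and> card I = n}"

type_synonym alice = "(nat \<Rightarrow> bool) \<Rightarrow> bool list"
type_synonym bob = "bool list \<Rightarrow> nat set \<Rightarrow> nat option"

text \<open>A public-coin one-way protocol: a distribution over deterministic (Alice, Bob) pairs.\<close>
definition rmi_succeeds ::
  "nat \<Rightarrow> nat \<Rightarrow> nat \<Rightarrow> nat \<Rightarrow> (alice \<times> bob) pmf \<Rightarrow> real \<Rightarrow> real \<Rightarrow> bool" where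
  "rmi_succeeds d k t s Prot \<alpha> \<delta> \<longleftrightarrow>
     (\<forall>(A, B) \<in> set_pmf Prot.
         (\<forall>x \<in> S_vec d (k * t). length (A x) = s) \<and>
         (\<forall>m I. length m = s \<longrightarrow> I \<in> I_sets d t \<longrightarrow> B m I \<in> insert None (Some ` I))) \<and>
     (let E = pmf_of_set (S_vec d (k * t)) \<bind> (\<lambda>x. pmf_of_set (I_sets d t) \<bind> (\<lambda>I.
                Prot \<bind> (\<lambda>(A, B). return_pmf (x, I, B (A x) I)))) in
       measure_pmf.prob E {(x, I, r). \<exists>i. r = Some i \<and> i \<in> I} \<ge> \<alpha> \<and>
       measure_pmf.prob E {(x, I, r). \<exists>i. r = Some i \<and> i \<in> I \<and> x i} \<le> \<delta>)"

end

theory Submission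
  imports Defs
begin

definition U :: "'a set \<Rightarrow> nat \<Rightarrow> 'a set pmf" where
  "U A n = pmf_of_set {J. J \<subseteq> A \<and> card J = n}"

lemma Usets_fin: "finite A \<Longrightarrow> finite {J. J \<subseteq> A \<and> card J = n}"
  by (rule finite_subset[of _ "Pow A"]) auto

lemma Usets_ne: "finite A \<Longrightarrow> n \<le> card A \<Longrightarrow> {J. J \<subseteq> A \<and> card J = n} \<noteq> {}"
  using obtain_subset_with_card_n[of n A] by blast

lemma Usets_card: "finite A \<Longrightarrow> card {J. J \<subseteq> A \<and> card J = n} = card A choose n"
  by (rule n_subsets)

lemma set_U: "finite A \<Longrightarrow> n \<le> card A \<Longrightarrow> set_pmf (U A n) = {J. J \<subseteq> A \<and> card J = n}"
  unfolding U_def by (rule set_pmf_of_set[OF Usets_ne Usets_fin])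

lemma pmf_U: "finite A \<Longrightarrow> n \<le> card A \<Longrightarrow>
   pmf (U A n) K = (if K \<subseteq> A \<and> card K = n then 1 / real (card A choose n) else 0)"
  unfolding U_def by (subst pmf_of_set[OF Usets_ne Usets_fin]) (auto simp: indicator_def Usets_card)

lemma count_supsets:
  assumes "finite A" "K \<subseteq> A" "card K = n'" "n' \<le> n"
  shows "card {J. J \<subseteq> A \<and> card J = n \<and> K \<subseteq> J} = (card A - n') choose (n - n')"
proof -
  have fK: "finite K" using assms finite_subset by blast
  have "bij_betw (\<lambda>J. J - K) {J. J \<subseteq> A \<and> card J = n \<and> K \<subseteq> J} {B. B \<subseteq> A - K \<and> card B = n - n'}"
  proof (rule bij_betw_byWitness[where f' = "\<lambda>B. B \<union> K"])
    show "\<forall>a\<in>{J. J \<subseteq> A \<and> card J = n \<and> K \<subseteq> J}. a - K \<union> K = a" by auto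
    show "\<forall>a'\<in>{B. B \<subseteq> A - K \<and> card B = n - n'}. a' \<union> K - K = a'" by auto
    show "(\<lambda>J. J - K) ` {J. J \<subseteq> A \<and> card J = n \<and> K \<subseteq> J} \<subseteq> {B. B \<subseteq> A - K \<and> card B = n - n'}"
    proof (rule image_subsetI)
      fix J assume "J \<in> {J. J \<subseteq> A \<and> card J = n \<and> K \<subseteq> J}"
      then show "J - K \<in> {B. B \<subseteq> A - K \<and> card B = n - n'}"
        using assms fK by (auto simp: card_Diff_subset)
    qed
    show "(\<lambda>B. B \<union> K) ` {B. B \<subseteq> A - K \<and> card B = n - n'} \<subseteq> {J. J \<subseteq> A \<and> card J = n \<and> K \<subseteq> J}"
    proof (rule image_subsetI)
      fix B assume "B \<in> {B. B \<subseteq> A - K \<and> card B = n - n'}"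
      then have B: "B \<subseteq> A - K" "card B = n - n'" by auto
      have fB: "finite B" using B assms finite_subset by blast
      have "card (B \<union> K) = card B + card K" using B fB fK by (subst card_Un_disjoint) auto
      then show "B \<union> K \<in> {J. J \<subseteq> A \<and> card J = n \<and> K \<subseteq> J}" using B assms by auto
    qed
  qed
  then have "card {J. J \<subseteq> A \<and> card J = n \<and> K \<subseteq> J} = card {B. B \<subseteq> A - K \<and> card B = n - n'}"
    by (rule bij_betw_same_card)
  also have "\<dots> = card (A - K) choose (n - n')" using assms by (intro n_subsets) auto
  also have "card (A - K) = card A - n'" using assms fK by (simp add: card_Diff_subset)
  finally show ?thesis .
qed

lemma U_bind_U:
  assumes A: "finite A" and le: "n' \<le> n" "n \<le> card A"
  shows "bind_pmf (U A n) (\<lambda>J. U J n') = U A n'"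
proof (rule pmf_eqI)
  fix K
  let ?S = "{J. J \<subseteq> A \<and> card J = n}"
  have fS: "finite ?S" "?S \<noteq> {}" using Usets_fin Usets_ne A le by auto
  have "pmf (bind_pmf (U A n) (\<lambda>J. U J n')) K = (\<integral>J. pmf (U J n') K \<partial>measure_pmf (U A n))"
    by (rule pmf_bind)
  also have "\<dots> = (\<Sum>J\<in>?S. pmf (U J n') K) / real (card ?S)"
    unfolding U_def[of A n] using fS by (simp add: integral_pmf_of_set)
  also have "(\<Sum>J\<in>?S. pmf (U J n') K) = (\<Sum>J\<in>?S. if K \<subseteq> J \<and> card K = n' then 1 / real (n choose n') else 0)"
  proof (rule sum.cong[OF refl])
    fix J assume J: "J \<in> ?S"
    then have fJ: "finite J" using A finite_subset by blast
    show "pmf (U J n') K = (if K \<subseteq> J \<and> card K = n' then 1 / real (n choose n') else 0)"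
      using J fJ le by (simp add: pmf_U)
  qed
  also have "\<dots> = (if K \<subseteq> A \<and> card K = n' then real ((card A - n') choose (n - n')) / real (n choose n') else 0)"
  proof (cases "K \<subseteq> A \<and> card K = n'")
    case True
    have cnt: "card {J. J \<subseteq> A \<and> card J = n \<and> K \<subseteq> J} = (card A - n') choose (n - n')"
      using True A le count_supsets by blast
    have "(\<Sum>J\<in>?S. if K \<subseteq> J \<and> card K = n' then 1 / real (n choose n') else 0)
        = (\<Sum>J\<in>{J\<in>?S. K \<subseteq> J}. 1 / real (n choose n'))"
      using True by (subst sum.inter_filter[OF fS(1), symmetric]) simp
    also have "{J\<in>?S. K \<subseteq> J} = {J. J \<subseteq> A \<and> card J = n \<and> K \<subseteq> J}" by auto
    finally show ?thesis using True cnt by simp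
  next
    case False
    have "(\<Sum>J\<in>?S. if K \<subseteq> J \<and> card K = n' then 1 / real (n choose n') else 0) = 0"
      using False by (intro sum.neutral) auto
    then show ?thesis using False by auto
  qed
  also have "real (card ?S) = real (card A choose n)" using A by (simp add: n_subsets)
  finally have eq: "pmf (bind_pmf (U A n) (\<lambda>J. U J n')) K =
      (if K \<subseteq> A \<and> card K = n' then real ((card A - n') choose (n - n')) / real (n choose n') else 0) / real (card A choose n)" .
  have cm: "real (card A choose n) * real (n choose n') = real (card A choose n') * real ((card A - n') choose (n - n'))"
    using choose_mult[OF le(1) le(2)] by (metis of_nat_mult)
  have p1: "(card A choose n) > 0" "(n choose n') > 0" using le by auto
  show "pmf (bind_pmf (U A n) (\<lambda>J. U J n')) K = pmf (U A n') K"
    unfolding eq using A le p1 cm by (auto simp: pmf_U field_simps)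
qed


lemma chain_Suc_U:
  "chain_pmf r (Suc m) J = bind_pmf (U J (card J div 2 ^ r))
       (\<lambda>J'. map_pmf (\<lambda>Js. J' # Js) (chain_pmf r m J'))"
  by (simp add: U_def map_pmf_def)

lemma chain_U:
  assumes "finite A" "n \<le> card A" "k < m"
  shows "bind_pmf (U A n) (\<lambda>J. map_pmf (\<lambda>Js. Js ! k) (chain_pmf r m J)) = U A (n div 2 ^ (r * (k + 1)))"
  using assms
proof (induction m arbitrary: A n k)
  case 0 then show ?case by simp
next
  case (Suc m)
  let ?n1 = "n div 2 ^ r"
  have n1: "?n1 \<le> n" by simp
  have "bind_pmf (U A n) (\<lambda>J. map_pmf (\<lambda>Js. Js ! k) (chain_pmf r (Suc m) J))
      = bind_pmf (U A n) (\<lambda>J. bind_pmf (U J ?n1) (\<lambda>J'. map_pmf (\<lambda>Js. (J' # Js) ! k) (chain_pmf r m J')))"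
  proof (rule bind_pmf_cong[OF refl])
    fix J assume "J \<in> set_pmf (U A n)"
    then have "card J = n" using Suc.prems set_U by blast
    then show "map_pmf (\<lambda>Js. Js ! k) (chain_pmf r (Suc m) J) =
        bind_pmf (U J ?n1) (\<lambda>J'. map_pmf (\<lambda>Js. (J' # Js) ! k) (chain_pmf r m J'))"
      by (simp add: U_def map_pmf_def bind_assoc_pmf bind_return_pmf)
  qed
  also have "\<dots> = U A (n div 2 ^ (r * (k + 1)))"
  proof (cases k)
    case 0
    have "bind_pmf (U A n) (\<lambda>J. bind_pmf (U J ?n1) (\<lambda>J'. map_pmf (\<lambda>Js. (J' # Js) ! k) (chain_pmf r m J')))
       = bind_pmf (U A n) (\<lambda>J. U J ?n1)"
      using 0 by (simp add: map_pmf_const bind_return_pmf')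
    also have "\<dots> = U A ?n1" using U_bind_U[OF Suc.prems(1) n1 Suc.prems(2)] .
    finally show ?thesis using 0 by simp
  next
    case (Suc k')
    have km: "k' < m" using Suc \<open>k < Suc m\<close> by simp
    have "bind_pmf (U A n) (\<lambda>J. bind_pmf (U J ?n1) (\<lambda>J'. map_pmf (\<lambda>Js. (J' # Js) ! k) (chain_pmf r m J')))
       = bind_pmf (bind_pmf (U A n) (\<lambda>J. U J ?n1)) (\<lambda>J'. map_pmf (\<lambda>Js. Js ! k') (chain_pmf r m J'))"
      using Suc by (simp add: bind_assoc_pmf)
    also have "\<dots> = bind_pmf (U A ?n1) (\<lambda>J'. map_pmf (\<lambda>Js. Js ! k') (chain_pmf r m J'))"
      using U_bind_U[OF Suc.prems(1) n1 Suc.prems(2)] by simp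
    also have "\<dots> = U A (?n1 div 2 ^ (r * (k' + 1)))"
      by (rule Suc.IH[OF Suc.prems(1) _ km]) (use Suc.prems(2) n1 in linarith)
    also have "?n1 div 2 ^ (r * (k' + 1)) = n div 2 ^ (r * (k + 1))"
    proof -
      have "?n1 div 2 ^ (r * (k' + 1)) = n div (2 ^ r * 2 ^ (r * (k' + 1)))" by (simp add: div_mult2_eq)
      also have "(2::nat) ^ r * 2 ^ (r * (k' + 1)) = 2 ^ (r * (k + 1))"
        using Suc by (simp add: power_add[symmetric] algebra_simps)
      finally show ?thesis .
    qed
    finally show ?thesis .
  qed
  finally show ?case .
qed

lemma zeta_alt:
  "zeta_sets p c = bind_pmf (U {0..<2 ^ (p - 1)} (2 ^ (p - 2)))
      (\<lambda>J0. map_pmf (\<lambda>Js. J0 # Js) (chain_pmf ((p - 2) div (c - 1)) (c - 1) J0))"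
  by (simp add: zeta_sets_def U_def map_pmf_def)

lemma zeta_level:
  assumes "p \<ge> 2" "m < c"
  shows "map_pmf (\<lambda>Js. Js ! m) (zeta_sets p c) =
         U {0..<2 ^ (p - 1)} (2 ^ (p - 2) div 2 ^ (((p - 2) div (c - 1)) * m))"
proof -
  have le: "2 ^ (p - 2) \<le> card {0..<(2::nat) ^ (p - 1)}"
    using assms by (simp add: power_increasing)
  show ?thesis
  proof (cases m)
    case 0
    then show ?thesis by (simp add: zeta_alt map_bind_pmf pmf.map_comp o_def map_pmf_const bind_return_pmf')
  next
    case (Suc m')
    have "map_pmf (\<lambda>Js. Js ! m) (zeta_sets p c) = bind_pmf (U {0..<2 ^ (p - 1)} (2 ^ (p - 2)))
      (\<lambda>J0. map_pmf (\<lambda>Js. Js ! m') (chain_pmf ((p - 2) div (c - 1)) (c - 1) J0))"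
      using Suc by (simp add: zeta_alt map_bind_pmf pmf.map_comp o_def)
    also have "\<dots> = U {0..<2 ^ (p - 1)} (2 ^ (p - 2) div 2 ^ (((p - 2) div (c - 1)) * (m' + 1)))"
      using Suc assms le by (intro chain_U) auto
    finally show ?thesis using Suc by simp
  qed
qed

lemma chain_support:
  assumes "Js \<in> set_pmf (chain_pmf r m J)" "finite J"
  shows "length Js = m \<and> sorted_wrt (\<lambda>A B. B \<subseteq> A) (J # Js)"
  using assms
proof (induction m arbitrary: J Js)
  case 0 then show ?case by simp
next
  case (Suc m)
  have ne: "{J'. J' \<subseteq> J \<and> card J' = card J div 2 ^ r} \<noteq> {}"
    using Usets_ne[OF Suc.prems(2), of "card J div 2 ^ r"] by simp
  from Suc.prems obtain J' Js' where J': "J' \<subseteq> J" and Js': "Js' \<in> set_pmf (chain_pmf r m J')"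
     and eq: "Js = J' # Js'"
    using set_pmf_of_set[OF ne Usets_fin[OF Suc.prems(2)]] by auto
  have fJ': "finite J'" using J' Suc.prems(2) finite_subset by blast
  from Suc.IH[OF Js' fJ'] have IH: "length Js' = m" "sorted_wrt (\<lambda>A B. B \<subseteq> A) (J' # Js')" by auto
  then show ?case using eq J' by auto
qed

lemma zeta_support':
  assumes "Js \<in> set_pmf (zeta_sets p c)" "c \<ge> 1"
  shows "length Js = c" "sorted_wrt (\<lambda>A B. B \<subseteq> A) Js" "\<forall>J\<in>set Js. J \<subseteq> {0..<2 ^ (p - 1)}"
proof -
  have le: "2 ^ (p - 2) \<le> card {0..<(2::nat) ^ (p - 1)}"
    by (simp add: power_increasing)
  from assms obtain J0 Js' where J0: "J0 \<subseteq> {0..<2 ^ (p - 1)}"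
    and Js': "Js' \<in> set_pmf (chain_pmf ((p - 2) div (c - 1)) (c - 1) J0)" and eq: "Js = J0 # Js'"
    unfolding zeta_alt using set_U[OF _ le] by auto
  have "finite J0" using J0 finite_subset by blast
  from chain_support[OF Js' this] have "length Js' = c - 1" "sorted_wrt (\<lambda>A B. B \<subseteq> A) (J0 # Js')" by auto
  then show "length Js = c" "sorted_wrt (\<lambda>A B. B \<subseteq> A) Js" "\<forall>J\<in>set Js. J \<subseteq> {0..<2 ^ (p - 1)}"
    using eq assms(2) J0 by auto
qed

definition vecof :: "nat set list \<Rightarrow> nat \<Rightarrow> nat" where
  "vecof Js = (\<lambda>i. sum_list (map (\<lambda>J. if i \<in> J then 1 else 0) Js))"

lemma mu_alt: "mu p c = map_pmf vecof (zeta_sets p c)"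
  unfolding mu_def vecof_def[abs_def] ..

lemma vecof_sum: "vecof Js i = (\<Sum>j<length Js. if i \<in> Js ! j then 1 else 0)"
  unfolding vecof_def by (simp add: sum_list_sum_nth atLeast0LessThan)

lemma vecof_ge:
  assumes "sorted_wrt (\<lambda>A B. B \<subseteq> A) Js" "m < length Js" "i \<in> Js ! m"
  shows "vecof Js i \<ge> m + 1"
proof -
  have "(\<Sum>j<Suc m. (1::nat)) = (\<Sum>j<Suc m. if i \<in> Js ! j then 1 else 0)"
  proof (rule sum.cong[OF refl])
    fix j assume "j \<in> {..<Suc m}"
    then have "j \<le> m" by simp
    then have "Js ! m \<subseteq> Js ! j" using assms
      by (cases "j = m") (auto simp: sorted_wrt_iff_nth_less)
    then show "1 = (if i \<in> Js ! j then 1 else 0)" using assms by auto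
  qed
  also have "\<dots> \<le> (\<Sum>j<length Js. if i \<in> Js ! j then 1 else 0)"
    using assms by (intro sum_mono2) auto
  finally show ?thesis by (simp add: vecof_sum)
qed

lemma vecof_le:
  assumes "sorted_wrt (\<lambda>A B. B \<subseteq> A) Js" "m < length Js" "i \<notin> Js ! m"
  shows "vecof Js i \<le> m"
proof -
  have "(\<Sum>j<length Js. if i \<in> Js ! j then 1 else 0) = (\<Sum>j<m. if i \<in> Js ! j then 1 else (0::nat))"
  proof (rule sum.mono_neutral_right)
    show "\<forall>j\<in>{..<length Js} - {..<m}. (if i \<in> Js ! j then 1 else 0) = (0::nat)"
    proof
      fix j assume "j \<in> {..<length Js} - {..<m}"
      then have "m \<le> j" "j < length Js" by auto
      then have "Js ! j \<subseteq> Js ! m" using assms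
        by (cases "j = m") (auto simp: sorted_wrt_iff_nth_less)
      then show "(if i \<in> Js ! j then 1 else 0) = (0::nat)" using assms by auto
    qed
  qed (use assms in auto)
  also have "\<dots> \<le> (\<Sum>j<m. 1)" by (intro sum_mono) auto
  finally show ?thesis by (simp add: vecof_sum)
qed

lemma vecof_dom:
  assumes "Js \<in> set_pmf (zeta_sets p c)" "c \<ge> 1"
  shows "vecof Js \<in> vec_dom (2 ^ (p - 1)) c"
proof -
  note z = zeta_support'[OF assms]
  have a: "vecof Js i \<le> c" for i
  proof -
    have "vecof Js i \<le> (\<Sum>j<length Js. 1)" unfolding vecof_sum by (intro sum_mono) auto
    then show ?thesis using z by simp
  qed
  have b: "vecof Js i = 0" if "i \<ge> 2 ^ (p - 1)" for i
  proof -
    have "\<forall>J\<in>set Js. i \<notin> J" using z(3) that by (meson atLeastLessThan_iff not_le subsetD)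
    then show ?thesis unfolding vecof_def by (induction Js) auto
  qed
  show ?thesis unfolding vec_dom_def using a b by auto
qed


lemma prob_bind_le:
  assumes "\<And>x. x \<in> set_pmf M \<Longrightarrow> measure_pmf.prob (f x) A \<le> \<delta>"
  shows "measure_pmf.prob (bind_pmf M f) A \<le> \<delta>"
proof -
  obtain x0 where "x0 \<in> set_pmf M" using set_pmf_not_empty[of M] by auto
  then have d0: "\<delta> \<ge> 0" using assms[of x0] measure_nonneg[of "measure_pmf (f x0)" A] by linarith
  have "emeasure (measure_pmf (bind_pmf M f)) A = (\<integral>\<^sup>+x. emeasure (f x) A \<partial>M)" by simp
  also have "\<dots> \<le> (\<integral>\<^sup>+x. ennreal \<delta> \<partial>M)"
  proof (rule nn_integral_mono_AE)
    show "AE x in measure_pmf M. emeasure (measure_pmf (f x)) A \<le> ennreal \<delta>"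
      using assms by (auto simp: AE_measure_pmf_iff measure_pmf.emeasure_eq_measure intro: ennreal_leI)
  qed
  also have "\<dots> = ennreal \<delta>" by simp
  finally have "ennreal (measure_pmf.prob (bind_pmf M f) A) \<le> ennreal \<delta>"
    by (simp add: measure_pmf.emeasure_eq_measure)
  then show ?thesis using d0 by (simp add: ennreal_le_iff)
qed

lemma prob_mono_supp:
  assumes "A \<inter> set_pmf M \<subseteq> B"
  shows "measure_pmf.prob M A \<le> measure_pmf.prob M B"
proof -
  have "measure_pmf.prob M A = measure_pmf.prob M (A \<inter> set_pmf M)" by (simp add: measure_Int_set_pmf)
  also have "\<dots> \<le> measure_pmf.prob M B" using assms by (intro measure_pmf.finite_measure_mono) auto
  finally show ?thesis .
qed

lemma bind_Pi_component:
  assumes "finite A" "a \<in> A"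
  shows "bind_pmf (Pi_pmf A dflt P) (\<lambda>F. G (F a)) = bind_pmf (P a) G"
proof -
  have "bind_pmf (Pi_pmf A dflt P) (\<lambda>F. G (F a)) = bind_pmf (map_pmf (\<lambda>F. F a) (Pi_pmf A dflt P)) G"
    by (simp add: bind_map_pmf)
  also have "\<dots> = bind_pmf (P a) G" using assms by (simp add: Pi_pmf_component)
  finally show ?thesis .
qed

lemma bind_cond_cancel':
  "bind_pmf (map_pmf f Z) (\<lambda>S. bind_pmf (cond_pmf Z {Js. f Js = S}) (\<lambda>Js. G S Js))
     = bind_pmf Z (\<lambda>Js. G (f Js) Js)"
proof -
  have "bind_pmf (map_pmf f Z) (\<lambda>S. bind_pmf (cond_pmf Z {Js. f Js = S}) (\<lambda>Js. G S Js))
      = bind_pmf (map_pmf f Z) (\<lambda>S. bind_pmf (cond_pmf Z {Js. f Js = S}) (\<lambda>Js. G (f Js) Js))"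
  proof (rule bind_pmf_cong[OF refl])
    fix S assume "S \<in> set_pmf (map_pmf f Z)"
    then have ne: "set_pmf Z \<inter> {Js. f Js = S} \<noteq> {}" by auto
    show "bind_pmf (cond_pmf Z {Js. f Js = S}) (\<lambda>Js. G S Js) = bind_pmf (cond_pmf Z {Js. f Js = S}) (\<lambda>Js. G (f Js) Js)"
      by (rule bind_pmf_cong[OF refl]) (use ne in auto)
  qed
  also have "\<dots> = bind_pmf (bind_pmf (map_pmf f Z) (\<lambda>S. cond_pmf Z {Js. f Js = S})) (\<lambda>Js. G (f Js) Js)"
    by (simp add: bind_assoc_pmf)
  also have "bind_pmf (map_pmf f Z) (\<lambda>S. cond_pmf Z {Js. f Js = S}) = Z"
  proof (rule bind_cond_pmf_cancel)
    show "\<And>x. x \<in> set_pmf (map_pmf f Z) \<Longrightarrow> set_pmf Z \<inter> {y. f y = x} \<noteq> {}" by auto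
    show "\<And>y. y \<in> set_pmf Z \<Longrightarrow> set_pmf (map_pmf f Z) \<inter> {x. f y = x} \<noteq> {}" by auto
    show "\<And>x y. x \<in> set_pmf (map_pmf f Z) \<Longrightarrow> y \<in> set_pmf Z \<Longrightarrow> f y = x \<Longrightarrow>
          measure_pmf.prob Z {y. f y = x} = measure_pmf.prob (map_pmf f Z) {x. f y = x}"
      by (auto simp: eq_commute intro!: arg_cong[where f="measure_pmf.prob Z"])
  qed
  finally show ?thesis .
qed

lemma S_vec_image: "S_vec d n = (\<lambda>S i. i \<in> S) ` I_sets d n"
proof
  show "S_vec d n \<subseteq> (\<lambda>S i. i \<in> S) ` I_sets d n"
  proof
    fix x assume x: "x \<in> S_vec d n"
    have "{i. x i} \<subseteq> {0..<d}" using x unfolding S_vec_def by (auto simp: not_le[symmetric])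
    then have "{i. x i} \<in> I_sets d n" using x unfolding S_vec_def I_sets_def by auto
    moreover have "x = (\<lambda>i. i \<in> {i. x i})" by simp
    ultimately show "x \<in> (\<lambda>S i. i \<in> S) ` I_sets d n" by blast
  qed
  show "(\<lambda>S i. i \<in> S) ` I_sets d n \<subseteq> S_vec d n"
    unfolding S_vec_def I_sets_def by auto
qed

lemma pmf_S_vec: "n \<le> d \<Longrightarrow> pmf_of_set (S_vec d n) = map_pmf (\<lambda>S i. i \<in> S) (U {0..<d} n)"
  unfolding S_vec_image U_def I_sets_def
proof (rule map_pmf_of_set_inj[symmetric])
  show "inj_on (\<lambda>S i. i \<in> S) {J. J \<subseteq> {0..<d} \<and> card J = n}"
    by (auto simp: inj_on_def fun_eq_iff)
  show "{J. J \<subseteq> {0..<d} \<and> card J = n} \<noteq> {}" if "n \<le> d" using Usets_ne[of "{0..<d}" n] that by simp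
  show "finite {J. J \<subseteq> {0..<d} \<and> card J = n}" by (simp add: Usets_fin)
qed


lemma E_eq:
  fixes Z :: "nat set list pmf" and D :: "(sketch \<times> cert_alg) pmf"
    and fX fY :: "nat set list \<Rightarrow> nat set" and Rf :: "nat set \<Rightarrow> (nat \<times> nat) option \<Rightarrow> nat option"
  assumes UX: "pmf_of_set (S_vec d n) = map_pmf (\<lambda>S i. i \<in> S) (map_pmf fX Z)"
    and UY: "pmf_of_set (I_sets d t) = map_pmf fY Z"
    and AX: "finite AX" "set_pmf (map_pmf fX Z) \<subseteq> AX"
    and AY: "finite AY" "set_pmf (map_pmf fY Z) \<subseteq> AY"
  defines "Prot \<equiv> Pi_pmf AX [] (\<lambda>S. cond_pmf Z {Js. fX Js = S}) \<bind> (\<lambda>FX.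
      Pi_pmf AY [] (\<lambda>I. cond_pmf Z {Js. fY Js = I}) \<bind> (\<lambda>FY.
      map_pmf (\<lambda>(sk, Alg). ((\<lambda>x. sk (vecof (FX {i. x i}))) :: alice,
          (\<lambda>m I. Rf I (Alg m (sk (vecof (FY I))))) :: bob)) D))"
  shows "pmf_of_set (S_vec d n) \<bind> (\<lambda>x. pmf_of_set (I_sets d t) \<bind> (\<lambda>I.
            Prot \<bind> (\<lambda>(A, B). return_pmf (x, I, B (A x) I))))
       = Z \<bind> (\<lambda>Xs. Z \<bind> (\<lambda>Ys. D \<bind> (\<lambda>(sk, Alg).
            return_pmf ((\<lambda>i. i \<in> fX Xs), fY Ys, Rf (fY Ys) (Alg (sk (vecof Xs)) (sk (vecof Ys)))))))"
proof -
  define G where "G = (\<lambda>S I Xs Ys. D \<bind> (\<lambda>(sk, Alg).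
            return_pmf ((\<lambda>i. i \<in> (S::nat set)), I, Rf I (Alg (sk (vecof Xs)) (sk (vecof Ys))))))"
  define PY where "PY = Pi_pmf AY [] (\<lambda>I. cond_pmf Z {Js. fY Js = I})"
  define PX where "PX = Pi_pmf AX [] (\<lambda>S. cond_pmf Z {Js. fX Js = S})"
  have inner: "Prot \<bind> (\<lambda>(A, B). return_pmf ((\<lambda>i. i \<in> S), I, B (A (\<lambda>i. i \<in> S)) I))
      = cond_pmf Z {Js. fX Js = S} \<bind> (\<lambda>Xs. cond_pmf Z {Js. fY Js = I} \<bind> (\<lambda>Ys. G S I Xs Ys))"
    if S: "S \<in> AX" and I: "I \<in> AY" for S I
  proof -
    have "Prot \<bind> (\<lambda>(A, B). return_pmf ((\<lambda>i. i \<in> S), I, B (A (\<lambda>i. i \<in> S)) I))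
        = PX \<bind> (\<lambda>FX. PY \<bind> (\<lambda>FY. G S I (FX S) (FY I)))"
      unfolding Prot_def PX_def[symmetric] PY_def[symmetric] G_def
      by (simp add: bind_assoc_pmf map_pmf_def bind_return_pmf case_prod_unfold)
    also have "\<dots> = PX \<bind> (\<lambda>FX. cond_pmf Z {Js. fY Js = I} \<bind> (\<lambda>Ys. G S I (FX S) Ys))"
      unfolding PY_def using AY(1) I by (subst bind_Pi_component) auto
    also have "\<dots> = cond_pmf Z {Js. fX Js = S} \<bind> (\<lambda>Xs. cond_pmf Z {Js. fY Js = I} \<bind> (\<lambda>Ys. G S I Xs Ys))"
      unfolding PX_def using AX(1) S
      by (rule bind_Pi_component[where G = "\<lambda>Xs. cond_pmf Z {Js. fY Js = I} \<bind> (\<lambda>Ys. G S I Xs Ys)"])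
    finally show ?thesis .
  qed
  have "pmf_of_set (S_vec d n) \<bind> (\<lambda>x. pmf_of_set (I_sets d t) \<bind> (\<lambda>I.
            Prot \<bind> (\<lambda>(A, B). return_pmf (x, I, B (A x) I))))
      = map_pmf fX Z \<bind> (\<lambda>S. map_pmf fY Z \<bind> (\<lambda>I.
            Prot \<bind> (\<lambda>(A, B). return_pmf ((\<lambda>i. i \<in> S), I, B (A (\<lambda>i. i \<in> S)) I))))"
    unfolding UX UY by (simp add: bind_map_pmf)
  also have "\<dots> = map_pmf fX Z \<bind> (\<lambda>S. map_pmf fY Z \<bind> (\<lambda>I.
        cond_pmf Z {Js. fX Js = S} \<bind> (\<lambda>Xs. cond_pmf Z {Js. fY Js = I} \<bind> (\<lambda>Ys. G S I Xs Ys))))"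
    using AX AY inner by (intro bind_pmf_cong refl) auto
  also have "\<dots> = map_pmf fX Z \<bind> (\<lambda>S. cond_pmf Z {Js. fX Js = S} \<bind> (\<lambda>Xs. map_pmf fY Z \<bind> (\<lambda>I.
        cond_pmf Z {Js. fY Js = I} \<bind> (\<lambda>Ys. G S I Xs Ys))))"
    by (subst bind_commute_pmf) (rule refl)
  also have "\<dots> = map_pmf fX Z \<bind> (\<lambda>S. cond_pmf Z {Js. fX Js = S} \<bind> (\<lambda>Xs. Z \<bind> (\<lambda>Ys. G S (fY Ys) Xs Ys)))"
    by (simp only: bind_cond_cancel')
  also have "\<dots> = Z \<bind> (\<lambda>Xs. Z \<bind> (\<lambda>Ys. G (fX Xs) (fY Ys) Xs Ys))"
    by (rule bind_cond_cancel')
  finally show ?thesis unfolding G_def .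
qed


lemma level_size:
  assumes "r * (c - 1) = p - 2" "m \<le> c - 1"
  shows "(2::nat) ^ (p - 2) div 2 ^ (r * m) = 2 ^ (r * (c - 1 - m))"
proof -
  have "r * m \<le> r * (c - 1)" using assms(2) by (rule mult_le_mono2)
  then have "(2::nat) ^ (r * (c - 1)) div 2 ^ (r * m) = 2 ^ (r * (c - 1) - r * m)"
    by (simp add: power_diff)
  then show ?thesis using assms by (simp add: diff_mult_distrib2)
qed

theorem mainTheorem8:
  fixes p c s :: nat and \<delta> :: real and D :: "(sketch \<times> cert_alg) pmf"
  assumes "p \<ge> 2" and "c \<ge> 2"
    and "(c - 1) dvd (p - 2)" and "(p - 2) div (c - 1) > 0"
    and "2 ^ (p - 1) \<ge> 8 * c * (c - 1)"
    and "cert_succeeds p c s D (1/8) \<delta>"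
    and "\<delta> \<le> 1 / real (2 ^ (p - 1))"
  shows "\<exists>k t (Prot :: (alice \<times> bob) pmf). k > 0 \<and> t > 0 \<and>
           real k \<ge> (real (2 ^ (p - 1)) / 2) powr (1 / (real c - 1)) \<and>
           2 * (k * t) \<le> 2 ^ (p - 1) \<and>
           rmi_succeeds (2 ^ (p - 1)) k t s Prot (1 / (8 * real c)) \<delta>"
proof -
  define d where "d = (2::nat) ^ (p - 1)"
  define r where "r = (p - 2) div (c - 1)"
  define Z where "Z = zeta_sets p c"
  have rc: "r * (c - 1) = p - 2" using assms(3) by (simp add: r_def)
  have r0: "r > 0" using assms(4) r_def by simp
  have p1: "p - 1 = Suc (p - 2)" using assms(1) by simp
  have d_eq: "d = 2 * 2 ^ (p - 2)" unfolding d_def p1 by simp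
  have c1: "c \<ge> 1" using assms(2) by simp
  note HH = assms(6)[unfolded cert_succeeds_def Let_def, folded d_def]
  have H1: "\<forall>(sk, Alg) \<in> set_pmf D.
         (\<forall>x \<in> vec_dom d c. length (sk x) = s) \<and>
         (\<forall>a b. length a = s \<longrightarrow> length b = s \<longrightarrow>
             Alg a b \<in> insert None (Some ` ({0..<d} \<times> {1..c - 1})))"
    using HH by (rule conjunct1)
  have H2: "measure_pmf.prob
       (mu p c \<bind> (\<lambda>X. mu p c \<bind> (\<lambda>Y. D \<bind> (\<lambda>(sk, Alg). return_pmf (Alg (sk X) (sk Y))))))
       {r. r \<noteq> None} \<ge> 1/8"
    using HH by (rule conjunct1[OF conjunct2])
  have H3: "\<forall>x \<in> set_pmf (mu p c). \<forall>y \<in> set_pmf (mu p c).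
        measure_pmf.prob D
          {(sk, Alg). \<exists>i l. Alg (sk x) (sk y) = Some (i, l) \<and> \<not> (x i < l \<and> l < y i)} \<le> \<delta>"
    using HH by (rule conjunct2[OF conjunct2])
  define M1 :: "(nat set list \<times> nat set list \<times> sketch \<times> cert_alg) pmf" where
    "M1 = Z \<bind> (\<lambda>Xs. Z \<bind> (\<lambda>Ys. map_pmf (\<lambda>(sk, Alg). (Xs, Ys, sk, Alg)) D))"
  define out :: "nat set list \<times> nat set list \<times> sketch \<times> cert_alg \<Rightarrow> (nat \<times> nat) option" where
    "out = (\<lambda>(Xs, Ys, sk, Alg). Alg (sk (vecof Xs)) (sk (vecof Ys)))"
  have supp: "Xs \<in> set_pmf Z \<and> Ys \<in> set_pmf Z \<and> (sk, Alg) \<in> set_pmf D"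
    if "(Xs, Ys, sk, Alg) \<in> set_pmf M1" for Xs Ys sk Alg
    using that unfolding M1_def by auto
  have "mu p c \<bind> (\<lambda>X. mu p c \<bind> (\<lambda>Y. D \<bind> (\<lambda>(sk, Alg). return_pmf (Alg (sk X) (sk Y)))))
      = map_pmf out M1"
    unfolding M1_def mu_alt Z_def
    by (simp only: bind_map_pmf map_bind_pmf pmf.map_comp) (simp add: map_pmf_def o_def out_def case_prod_unfold)
  with H2 have A: "measure_pmf.prob M1 {\<omega>. out \<omega> \<noteq> None} \<ge> 1/8"
    by (simp add: vimage_def)
  define Ev where "Ev = (\<lambda>l. {\<omega>. \<exists>i. out \<omega> = Some (i, l)})"
  have "{\<omega>. out \<omega> \<noteq> None} \<inter> set_pmf M1 \<subseteq> (\<Union>l\<in>{1..c-1}. Ev l)"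
  proof
    fix \<omega> assume w: "\<omega> \<in> {\<omega>. out \<omega> \<noteq> None} \<inter> set_pmf M1"
    obtain Xs Ys sk Alg where we: "\<omega> = (Xs, Ys, sk, Alg)" by (cases \<omega>) auto
    from w we supp have s1: "Xs \<in> set_pmf Z" "Ys \<in> set_pmf Z" "(sk, Alg) \<in> set_pmf D" by auto
    have "vecof Xs \<in> vec_dom d c" "vecof Ys \<in> vec_dom d c"
      using s1 vecof_dom c1 unfolding Z_def d_def by auto
    moreover have hh: "(\<forall>x \<in> vec_dom d c. length (sk x) = s) \<and>
         (\<forall>a b. length a = s \<longrightarrow> length b = s \<longrightarrow>
             Alg a b \<in> insert None (Some ` ({0..<d} \<times> {1..c - 1})))"
      using bspec[OF H1 s1(3)] by simp
    ultimately have "Alg (sk (vecof Xs)) (sk (vecof Ys)) \<in> insert None (Some ` ({0..<d} \<times> {1..c - 1}))"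
      by blast
    then show "\<omega> \<in> (\<Union>l\<in>{1..c-1}. Ev l)" using w we unfolding Ev_def out_def by auto
  qed
  then have "measure_pmf.prob M1 {\<omega>. out \<omega> \<noteq> None} \<le> measure_pmf.prob M1 (\<Union>l\<in>{1..c-1}. Ev l)"
    by (rule prob_mono_supp)
  also have "\<dots> \<le> (\<Sum>l\<in>{1..c-1}. measure_pmf.prob M1 (Ev l))"
    by (rule measure_pmf.finite_measure_subadditive_finite) auto
  finally have B: "(\<Sum>l\<in>{1..c-1}. measure_pmf.prob M1 (Ev l)) \<ge> 1/8" using A by linarith
  obtain l where l: "l \<in> {1..c-1}" and ql: "measure_pmf.prob M1 (Ev l) \<ge> 1 / (8 * (real c - 1))"
  proof (rule ccontr)
    assume "\<not> thesis"
    then have lt: "\<forall>l\<in>{1..c-1}. measure_pmf.prob M1 (Ev l) < 1 / (8 * (real c - 1))"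
      using that by (meson not_le)
    have "(\<Sum>l\<in>{1..c-1}. measure_pmf.prob M1 (Ev l)) < (\<Sum>l\<in>{1..c-1}. 1 / (8 * (real c - 1)))"
      using lt assms(2) by (intro sum_strict_mono) auto
    also have "\<dots> = 1/8" using assms(2) by (simp add: of_nat_diff)
    finally show False using B by linarith
  qed
  have l1: "1 \<le> l" "l \<le> c - 1" "l < c" "l - 1 < c" using l by auto
  define k where "k = (2::nat) ^ r"
  define t where "t = (2::nat) ^ (r * (c - 1 - l))"
  have kt: "k * t = 2 ^ (r * (c - 1 - (l - 1)))"
  proof -
    have e: "c - 1 - (l - 1) = Suc (c - 1 - l)" using l1 by simp
    have "(2::nat) ^ r * 2 ^ (r * (c - 1 - l)) = 2 ^ (r + r * (c - 1 - l))" by (simp add: power_add)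
    also have "r + r * (c - 1 - l) = r * (c - 1 - (l - 1))" unfolding e by simp
    finally show ?thesis unfolding k_def t_def .
  qed
  have LX: "map_pmf (\<lambda>Js. Js ! (l - 1)) Z = U {0..<d} (k * t)"
    unfolding Z_def d_def kt using zeta_level[OF assms(1) l1(4)] level_size[OF rc, of "l - 1"] l1
    by (simp add: r_def)
  have LY: "map_pmf (\<lambda>Js. Js ! l) Z = U {0..<d} t"
    unfolding Z_def d_def t_def using zeta_level[OF assms(1) l1(3)] level_size[OF rc, of l] l1
    by (simp add: r_def)
  have kt_le: "k * t \<le> 2 ^ (p - 2)"
  proof -
    have "r * (c - 1 - (l - 1)) \<le> r * (c - 1)" by (intro mult_le_mono2) simp
    then show ?thesis unfolding kt rc[symmetric] by (intro power_increasing) auto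
  qed
  then have kt_d: "2 * (k * t) \<le> d" "k * t \<le> d" using d_eq by auto
  have t_d: "t \<le> k * t" unfolding k_def by simp
  have td: "t \<le> d" using t_d kt_d(2) by linarith
  define Rf :: "nat set \<Rightarrow> (nat \<times> nat) option \<Rightarrow> nat option" where
    "Rf = (\<lambda>I ov. (case ov of None \<Rightarrow> None
       | Some (i, l') \<Rightarrow> (if l' = l \<and> i \<in> I then Some i else None)))"
  define fX where "fX = (\<lambda>Js::nat set list. Js ! (l - 1))"
  define fY where "fY = (\<lambda>Js::nat set list. Js ! l)"
  define Prot where "Prot \<equiv> Pi_pmf (I_sets d (k * t)) [] (\<lambda>S. cond_pmf Z {Js. fX Js = S}) \<bind> (\<lambda>FX.
      Pi_pmf (I_sets d t) [] (\<lambda>I. cond_pmf Z {Js. fY Js = I}) \<bind> (\<lambda>FY.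
      map_pmf (\<lambda>(sk, Alg). ((\<lambda>x. sk (vecof (FX {i. x i}))) :: alice,
          (\<lambda>m I. Rf I (Alg m (sk (vecof (FY I))))) :: bob)) D))"
  have finI: "finite (I_sets d n)" for n unfolding I_sets_def by (rule Usets_fin) simp
  have setX: "set_pmf (map_pmf fX Z) = I_sets d (k * t)"
    unfolding fX_def LX I_sets_def using kt_d by (subst set_U) auto
  have setY: "set_pmf (map_pmf fY Z) = I_sets d t"
    unfolding fY_def LY I_sets_def using td by (subst set_U) auto
  have Eq: "pmf_of_set (S_vec d (k * t)) \<bind> (\<lambda>x. pmf_of_set (I_sets d t) \<bind> (\<lambda>I.
            Prot \<bind> (\<lambda>(A, B). return_pmf (x, I, B (A x) I))))
       = Z \<bind> (\<lambda>Xs. Z \<bind> (\<lambda>Ys. D \<bind> (\<lambda>(sk, Alg).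
            return_pmf ((\<lambda>i. i \<in> fX Xs), fY Ys, Rf (fY Ys) (Alg (sk (vecof Xs)) (sk (vecof Ys)))))))"
    unfolding Prot_def
  proof (rule E_eq)
    show "pmf_of_set (S_vec d (k * t)) = map_pmf (\<lambda>S i. i \<in> S) (map_pmf fX Z)"
      unfolding fX_def LX using kt_d(2) by (rule pmf_S_vec)
    show "pmf_of_set (I_sets d t) = map_pmf fY Z"
      unfolding fY_def LY by (simp add: U_def I_sets_def)
  qed (simp_all only: finI setX setY order_refl)
  define Hf :: "nat set list \<times> nat set list \<times> sketch \<times> cert_alg \<Rightarrow> (nat \<Rightarrow> bool) \<times> nat set \<times> nat option"
    where "Hf = (\<lambda>(Xs, Ys, sk, Alg). ((\<lambda>i. i \<in> fX Xs), fY Ys, Rf (fY Ys) (Alg (sk (vecof Xs)) (sk (vecof Ys)))))"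
  have Eq2: "Z \<bind> (\<lambda>Xs. Z \<bind> (\<lambda>Ys. D \<bind> (\<lambda>(sk, Alg).
            return_pmf ((\<lambda>i. i \<in> fX Xs), fY Ys, Rf (fY Ys) (Alg (sk (vecof Xs)) (sk (vecof Ys)))))))
       = map_pmf Hf M1"
    unfolding M1_def
    by (simp only: map_bind_pmf pmf.map_comp) (simp add: map_pmf_def o_def Hf_def case_prod_unfold)
  define Err :: "(nat set list \<times> nat set list \<times> sketch \<times> cert_alg) set" where
    "Err = {(Xs, Ys, sk, Alg). \<exists>i l'. Alg (sk (vecof Xs)) (sk (vecof Ys)) = Some (i, l') \<and>
              \<not> (vecof Xs i < l' \<and> l' < vecof Ys i)}"
  have ErrB: "measure_pmf.prob M1 Err \<le> \<delta>"
  proof -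
    have "measure_pmf.prob (map_pmf (\<lambda>(sk, Alg). (Xs, Ys, sk, Alg)) D) Err \<le> \<delta>"
      if "Xs \<in> set_pmf Z" "Ys \<in> set_pmf Z" for Xs Ys
    proof -
      have "vecof Xs \<in> set_pmf (mu p c)" "vecof Ys \<in> set_pmf (mu p c)"
        using that by (auto simp: mu_alt Z_def)
      then have "measure_pmf.prob D {(sk, Alg). \<exists>i l. Alg (sk (vecof Xs)) (sk (vecof Ys)) = Some (i, l) \<and>
            \<not> (vecof Xs i < l \<and> l < vecof Ys i)} \<le> \<delta>" using H3 by blast
      moreover have "(\<lambda>(sk, Alg). (Xs, Ys, sk, Alg)) -` Err = {(sk, Alg). \<exists>i l. Alg (sk (vecof Xs)) (sk (vecof Ys)) = Some (i, l) \<and>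
            \<not> (vecof Xs i < l \<and> l < vecof Ys i)}" by (auto simp: Err_def)
      ultimately show ?thesis by simp
    qed
    then show ?thesis unfolding M1_def by (intro prob_bind_le) auto
  qed
  define SuccE :: "((nat \<Rightarrow> bool) \<times> nat set \<times> nat option) set" where
    "SuccE = {(x, I, r). \<exists>i. r = Some i \<and> i \<in> I}"
  define ErrE :: "((nat \<Rightarrow> bool) \<times> nat set \<times> nat option) set" where
    "ErrE = {(x, I, r). \<exists>i. r = Some i \<and> i \<in> I \<and> x i}"
  have zs: "length Js = c" "sorted_wrt (\<lambda>A B. B \<subseteq> A) Js" if "Js \<in> set_pmf Z" for Js
    using zeta_support'[OF that[unfolded Z_def] c1] by auto
  have "Ev l \<inter> set_pmf M1 \<subseteq> Hf -` SuccE \<union> Err"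
  proof
    fix \<omega> assume w: "\<omega> \<in> Ev l \<inter> set_pmf M1"
    obtain Xs Ys sk Alg where we: "\<omega> = (Xs, Ys, sk, Alg)" by (cases \<omega>) auto
    from w we supp have s1: "Xs \<in> set_pmf Z" "Ys \<in> set_pmf Z" by auto
    from w we obtain i where o: "Alg (sk (vecof Xs)) (sk (vecof Ys)) = Some (i, l)"
      unfolding Ev_def out_def by auto
    show "\<omega> \<in> Hf -` SuccE \<union> Err"
    proof (cases "i \<in> Ys ! l")
      case True
      then show ?thesis using o we by (simp add: Hf_def SuccE_def Rf_def fY_def)
    next
      case False
      have "vecof Ys i \<le> l" using vecof_le[OF zs(2)[OF s1(2)] _ False] zs(1)[OF s1(2)] l1 by simp
      then show ?thesis using o we by (auto simp: Err_def)
    qed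
  qed
  then have "measure_pmf.prob M1 (Ev l) \<le> measure_pmf.prob M1 (Hf -` SuccE \<union> Err)"
    by (rule prob_mono_supp)
  also have "\<dots> \<le> measure_pmf.prob M1 (Hf -` SuccE) + measure_pmf.prob M1 Err"
    by (rule measure_Un_le) auto
  finally have SuccB: "measure_pmf.prob M1 (Hf -` SuccE) \<ge> 1 / (8 * (real c - 1)) - \<delta>"
    using ql ErrB by linarith
  have "Hf -` ErrE \<inter> set_pmf M1 \<subseteq> Err"
  proof
    fix \<omega> assume w: "\<omega> \<in> Hf -` ErrE \<inter> set_pmf M1"
    obtain Xs Ys sk Alg where we: "\<omega> = (Xs, Ys, sk, Alg)" by (cases \<omega>) auto
    from w we supp have s1: "Xs \<in> set_pmf Z" "Ys \<in> set_pmf Z" by auto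
    from w we obtain i where o: "Alg (sk (vecof Xs)) (sk (vecof Ys)) = Some (i, l)" and iX: "i \<in> Xs ! (l - 1)"
      by (auto simp: Hf_def ErrE_def Rf_def fX_def split: option.splits if_splits)
    have "vecof Xs i \<ge> l - 1 + 1" using vecof_ge[OF zs(2)[OF s1(1)] _ iX] zs(1)[OF s1(1)] l1 by simp
    then show "\<omega> \<in> Err" using o we l1 by (auto simp: Err_def)
  qed
  then have ErrEB: "measure_pmf.prob M1 (Hf -` ErrE) \<le> \<delta>"
    using prob_mono_supp ErrB order_trans by blast
  have cr: "real c \<ge> 2" using assms(2) by simp
  have dd: "real d \<ge> 8 * real c * (real c - 1)"
  proof -
    have "real (8 * c * (c - 1)) \<le> real d" using assms(5) unfolding d_def by (simp only: of_nat_le_iff)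
    then show ?thesis using assms(2) by (simp add: of_nat_diff)
  qed
  have "\<delta> \<le> 1 / (8 * real c * (real c - 1))"
  proof -
    have "1 / real d \<le> 1 / (8 * real c * (real c - 1))"
    proof (rule divide_left_mono)
      have pos: "0 < 8 * real c * (real c - 1)" using cr by simp
      then have "0 < real d" using dd by linarith
      then show "0 < real d * (8 * real c * (real c - 1))" using pos by simp
    qed (use dd in auto)
    then show ?thesis using assms(7) unfolding d_def by simp
  qed
  moreover have "1 / (8 * (real c - 1)) - 1 / (8 * real c * (real c - 1)) = 1 / (8 * real c)"
  proof -
    have h1: "real c - 1 \<noteq> 0" "real c \<noteq> 0" using cr by auto
    have e1: "1 / (8 * (real c - 1)) = real c / (8 * real c * (real c - 1))" using h1 by simp
    have "1 / (8 * (real c - 1)) - 1 / (8 * real c * (real c - 1)) = (real c - 1) / (8 * real c * (real c - 1))"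
      unfolding e1 by (simp add: diff_divide_distrib)
    also have "\<dots> = 1 / (8 * real c)" using h1 by simp
    finally show ?thesis .
  qed
  ultimately have SuccF: "measure_pmf.prob M1 (Hf -` SuccE) \<ge> 1 / (8 * real c)"
    using SuccB by linarith
  have kpow: "real k \<ge> (real d / 2) powr (1 / (real c - 1))"
  proof -
    have "real d / 2 = (2::real) ^ (r * (c - 1))" using d_eq rc by simp
    also have "\<dots> = 2 powr (real (r * (c - 1)))" by (rule powr_realpow[symmetric]) simp
    finally have "real d / 2 = 2 powr (real r * real (c - 1))" by simp
    then have "(real d / 2) powr (1 / (real c - 1)) = 2 powr (real r * real (c - 1) * (1 / (real c - 1)))"
      by (simp add: powr_powr)
    also have "real r * real (c - 1) * (1 / (real c - 1)) = real r" using cr by (simp add: of_nat_diff)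
    also have "2 powr real r = real k" by (simp add: k_def powr_realpow)
    finally show ?thesis by simp
  qed
  have supp_ok: "\<forall>(A, B) \<in> set_pmf Prot.
         (\<forall>x \<in> S_vec d (k * t). length (A x) = s) \<and>
         (\<forall>m I. length m = s \<longrightarrow> I \<in> I_sets d t \<longrightarrow> B m I \<in> insert None (Some ` I))"
  proof (clarify)
    fix A B assume AB: "(A, B) \<in> set_pmf Prot"
    then obtain FX FY sk Alg where
      FX: "FX \<in> set_pmf (Pi_pmf (I_sets d (k * t)) [] (\<lambda>S. cond_pmf Z {Js. fX Js = S}))"
      and skA: "(sk, Alg) \<in> set_pmf D"
      and Aeq: "A = (\<lambda>x. sk (vecof (FX {i. x i})))"
      and Beq: "B = (\<lambda>m I. Rf I (Alg m (sk (vecof (FY I)))))"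
      unfolding Prot_def by auto
    have "length (A x) = s" if x: "x \<in> S_vec d (k * t)" for x
    proof -
      obtain S where S: "S \<in> I_sets d (k * t)" and xS: "x = (\<lambda>i. i \<in> S)"
        using x S_vec_image by blast
      have Sx: "{i. x i} = S" using xS by simp
      have "S \<in> fX ` set_pmf Z" using S setX by simp
      then obtain Js0 where "Js0 \<in> set_pmf Z" "fX Js0 = S" by blast
      then have ne: "set_pmf Z \<inter> {Js. fX Js = S} \<noteq> {}" by blast
      have "FX S \<in> set_pmf (cond_pmf Z {Js. fX Js = S})"
        using FX S finI by (auto simp: set_Pi_pmf PiE_dflt_def)
      then have "FX S \<in> set_pmf Z" using ne by (simp add: set_cond_pmf)
      then have "vecof (FX S) \<in> vec_dom d c" using vecof_dom c1 unfolding Z_def d_def by auto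
      then show ?thesis using bspec[OF H1 skA] Aeq Sx by simp
    qed
    moreover have "B m I \<in> insert None (Some ` I)" for m I
      unfolding Beq Rf_def by (auto split: option.splits)
    ultimately show "(\<forall>x \<in> S_vec d (k * t). length (A x) = s) \<and>
         (\<forall>m I. length m = s \<longrightarrow> I \<in> I_sets d t \<longrightarrow> B m I \<in> insert None (Some ` I))" by blast
  qed
  have rmi: "rmi_succeeds d k t s Prot (1 / (8 * real c)) \<delta>"
    unfolding rmi_succeeds_def Let_def Eq Eq2 measure_map_pmf
    using supp_ok SuccF ErrEB unfolding SuccE_def ErrE_def by simp
  show ?thesis unfolding d_def[symmetric]
    using rmi kpow kt_d(1) by (intro exI[of _ k] exI[of _ t] exI[of _ Prot]) (simp add: k_def t_def)
qed

end
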